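(* Let $A\in GL(n,\mathbb Z)$ with columns $\mathbf a_1,\dots,\mathbf a_n$ and $\lambda\in\mathbb R^n$. Let $\phi^*$ be the automorphism of $\overline{\mathbb R}[x_1^{\pm1},\dots,x_n^{\pm1}]$ with $\phi^*(x_i)=\lambda_i\odot\mathbf x^{\mathbf a_i}$, let $\phi^*_A$ be the automorphism (of $\overline{\mathbb R}$- or $\mathbb B$-Laurent polynomials) with $\phi_A^*(x_i)=\mathbf x^{\mathbf a_i}$, and let $\operatorname{trop}(\phi):\mathbb R^n\to\mathbb R^n$ be $\mathbf w\mapsto A^T\mathbf w+\lambda$. If $I\subseteq\overline{\mathbb R}[x_1^{\pm1},\dots,x_n^{\pm1}]$ is a tropical ideal and $I'=(\phi^* )^{-1}(I)$, then $I'$ is a tropical ideal, $\phi^*_A(\operatorname{in}_{\operatorname{trop}(\phi)(\mathbf w)}(I'))=\operatorname{in}_{\mathbf w}(I)$ for all $\mathbf w\in\mathbb R^n$, and $V(I')=\operatorname{trop}(\phi)(V(I))$.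
   Context: $\overline{\mathbb R}=(\mathbb R\cup\{\infty\},\min,+)$, $\odot=+$, $\mathbb B=\{0,\infty\}$. $[f]_{\mathbf x^{\mathbf u}}$ is the coefficient of $\mathbf x^{\mathbf u}$, $f(\mathbf w)=\min_{\mathbf u}([f]_{\mathbf x^{\mathbf u}}+\mathbf u\cdot\mathbf w)$. Tropical ideal: for $f,g\in I$ and $\mathbf x^{\mathbf u}$ with $[f]_{\mathbf x^{\mathbf u}}=[g]_{\mathbf x^{\mathbf u}}\ne\infty$ there is $h\in I$ with $[h]_{\mathbf x^{\mathbf u}}=\infty$ and $[h]_{\mathbf x^{\mathbf v}}\ge\min([f]_{\mathbf x^{\mathbf v}},[g]_{\mathbf x^{\mathbf v}})$ for all $\mathbf v$, with equality when $[f]_{\mathbf x^{\mathbf v}}\ne[g]_{\mathbf x^{\mathbf v}}$. $\operatorname{in}_{\mathbf w}(f)=\bigoplus_{\mathbf u:[f]_{\mathbf x^{\mathbf u}}+\mathbf u\cdot\mathbf w=f(\mathbf w)}\mathbf x^{\mathbf u}\in\mathbb B[x^{\pm1}]$, $\operatorname{in}_{\mathbf w}(I)=\{\operatorname{in}_{\mathbf w}(f):f\in I\}$. $V(I)=\{\mathbf w\in\mathbb R^n:$ for every $f\in I$, $f\ne\infty$, the minimum in $f(\mathbf w)$ is attained at least twice$\}$. *)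

theory Defs
  imports "HOL-Analysis.Analysis"
begin

text \<open>Tropical Laurent polynomials in n variables (n encoded by the finite index type 'n)
  over Rbar = (R \<union> {\<infinity>}, min, +). A polynomial is its coefficient function on exponent
  vectors in Z^n; coefficients live in ereal and are never -\<infinity>; the tropical zero is \<infinity>.\<close>

type_synonym 'n tpoly = "int ^ 'n \<Rightarrow> ereal"

definition is_tpoly :: "'n::finite tpoly \<Rightarrow> bool" where
  "is_tpoly f \<longleftrightarrow> finite {u. f u \<noteq> \<infinity>} \<and> (\<forall>u. f u \<noteq> -\<infinity>)"

definition wdot :: "real ^ 'n::finite \<Rightarrow> int ^ 'n \<Rightarrow> real" where
  "wdot w u = (\<Sum>i\<in>UNIV. w $ i * real_of_int (u $ i))"

definition tadd :: "'n::finite tpoly \<Rightarrow> 'n tpoly \<Rightarrow> 'n tpoly" where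
  "tadd f g = (\<lambda>u. min (f u) (g u))"

definition tmul :: "'n::finite tpoly \<Rightarrow> 'n tpoly \<Rightarrow> 'n tpoly" where
  "tmul f g = (\<lambda>u. Inf {f a + g b | a b. a + b = u})"

definition tzero :: "'n::finite tpoly" where
  "tzero = (\<lambda>u. \<infinity>)"

definition teval :: "'n::finite tpoly \<Rightarrow> real ^ 'n \<Rightarrow> ereal" where
  "teval f w = Inf {f u + ereal (wdot w u) | u. True}"

definition is_tideal_set :: "'n::finite tpoly set \<Rightarrow> bool" where
  "is_tideal_set I \<longleftrightarrow> (\<forall>f\<in>I. is_tpoly f) \<and> tzero \<in> I \<and>
     (\<forall>f\<in>I. \<forall>g\<in>I. tadd f g \<in> I) \<and>
     (\<forall>f\<in>I. \<forall>g. is_tpoly g \<longrightarrow> tmul g f \<in> I)"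

definition tropical_ideal :: "'n::finite tpoly set \<Rightarrow> bool" where
  "tropical_ideal I \<longleftrightarrow> is_tideal_set I \<and>
     (\<forall>f\<in>I. \<forall>g\<in>I. \<forall>u. f u = g u \<and> f u \<noteq> \<infinity> \<longrightarrow>
        (\<exists>h\<in>I. h u = \<infinity> \<and>
           (\<forall>v. h v \<ge> min (f v) (g v) \<and> (f v \<noteq> g v \<longrightarrow> h v = min (f v) (g v)))))"

text \<open>Initial form in_w(f) in B[x^{\<pm>1}], B = {0,\<infinity>} \<subseteq> Rbar; coefficient 0 exactly at
  the exponents where the minimum in f(w) is attained.\<close>
definition initial :: "real ^ 'n::finite \<Rightarrow> 'n tpoly \<Rightarrow> 'n tpoly" where
  "initial w f = (\<lambda>u. if f u \<noteq> \<infinity> \<and> f u + ereal (wdot w u) = teval f w then 0 else \<infinity>)"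

definition initial_ideal :: "real ^ 'n::finite \<Rightarrow> 'n tpoly set \<Rightarrow> 'n tpoly set" where
  "initial_ideal w I = initial w ` I"

definition tvariety :: "'n::finite tpoly set \<Rightarrow> (real ^ 'n) set" where
  "tvariety I = {w. \<forall>f\<in>I. f \<noteq> tzero \<longrightarrow>
      (\<exists>u v. u \<noteq> v \<and> f u + ereal (wdot w u) = teval f w \<and> f v + ereal (wdot w v) = teval f w)}"

text \<open>The semiring map phi^* determined by x_i \<mapsto> lambda_i \<odot> x^{a_i} (a_i = i-th column of A):
  phi^*(\<Oplus>_u c_u x^u) = \<Oplus>_u (c_u + lambda.u) x^{A u}; like terms are combined by min.
  phi^*_A is the case lambda = 0.\<close>
definition phi_star :: "int ^ 'n ^ 'n \<Rightarrow> real ^ 'n \<Rightarrow> 'n::finite tpoly \<Rightarrow> 'n tpoly" where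
  "phi_star A lam f = (\<lambda>v. Inf {f u + ereal (wdot lam u) | u. A *v u = v})"

definition trop_phi :: "int ^ 'n ^ 'n \<Rightarrow> real ^ 'n \<Rightarrow> real ^ 'n \<Rightarrow> real ^ 'n::finite" where
  "trop_phi A lam w = (\<chi> i. (\<Sum>j\<in>UNIV. real_of_int (A $ j $ i) * w $ j) + lam $ i)"

end

theory Submission
  imports Defs
begin

lemma inv_vec1:
  fixes A B :: "int ^ 'n ^ 'n::finite"
  assumes "A ** B = mat 1"
  shows "A *v (B *v v) = v"
  by (simp add: matrix_vector_mul_assoc assms)

lemma phi_star_at:
  fixes A B :: "int ^ 'n ^ 'n::finite"
  assumes AB: "A ** B = mat 1" and BA: "B ** A = mat 1"
  shows "phi_star A lam f v = f (B *v v) + ereal (wdot lam (B *v v))"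
proof -
  have "{f u + ereal (wdot lam u) | u. A *v u = v} = {f (B *v v) + ereal (wdot lam (B *v v))}"
  proof -
    have "A *v u = v \<longleftrightarrow> u = B *v v" for u
      using inv_vec1[OF AB] inv_vec1[OF BA] by metis
    then show ?thesis by auto
  qed
  then show ?thesis unfolding phi_star_def by simp
qed

lemma phi_star_A:
  fixes A B :: "int ^ 'n ^ 'n::finite"
  assumes AB: "A ** B = mat 1" and BA: "B ** A = mat 1"
  shows "phi_star A lam f (A *v u) = f u + ereal (wdot lam u)"
  using phi_star_at[OF AB BA] inv_vec1[OF BA] by simp

lemma ereal_add_inf_iff[simp]: "(x + ereal c = \<infinity>) \<longleftrightarrow> x = \<infinity>"
  by (cases x) auto

lemma wdot_zero[simp]: "wdot 0 u = 0"
  by (simp add: wdot_def)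

lemma wdot_add: "wdot lam (u + v) = wdot lam u + wdot lam v"
  by (simp add: wdot_def algebra_simps sum.distrib)

lemma wdot_trop:
  fixes A :: "int ^ 'n ^ 'n::finite"
  shows "wdot w (A *v u) + wdot lam u = wdot (trop_phi A lam w) u"
proof -
  have "wdot w (A *v u) = (\<Sum>i\<in>UNIV. \<Sum>j\<in>UNIV. w $ i * real_of_int (A $ i $ j) * real_of_int (u $ j))"
    by (simp add: wdot_def matrix_vector_mult_def sum_distrib_left mult.assoc)
  also have "\<dots> = (\<Sum>j\<in>UNIV. \<Sum>i\<in>UNIV. w $ i * real_of_int (A $ i $ j) * real_of_int (u $ j))"
    by (rule sum.swap)
  also have "\<dots> = (\<Sum>j\<in>UNIV. (\<Sum>i\<in>UNIV. real_of_int (A $ i $ j) * w $ i) * real_of_int (u $ j))"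
    by (simp add: sum_distrib_right sum_distrib_left mult_ac)
  finally show ?thesis
    by (simp add: wdot_def trop_phi_def algebra_simps sum.distrib)
qed

definition psi :: "int ^ 'n ^ 'n \<Rightarrow> real ^ 'n \<Rightarrow> 'n::finite tpoly \<Rightarrow> 'n tpoly" where
  "psi A lam h = (\<lambda>u. h (A *v u) - ereal (wdot lam u))"

lemma phi_psi:
  fixes A B :: "int ^ 'n ^ 'n::finite"
  assumes AB: "A ** B = mat 1" and BA: "B ** A = mat 1"
  shows "phi_star A lam (psi A lam h) = h"
proof
  fix v
  show "phi_star A lam (psi A lam h) v = h v"
    unfolding phi_star_at[OF AB BA] psi_def inv_vec1[OF AB]
    by (cases "h v") auto
qed

lemma tpoly_pre:
  fixes A B :: "int ^ 'n ^ 'n::finite"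
  assumes AB: "A ** B = mat 1" and BA: "B ** A = mat 1"
    and "is_tpoly (phi_star A lam f)"
  shows "is_tpoly f"
proof -
  have e: "f u = phi_star A lam f (A *v u) - ereal (wdot lam u)" for u
    unfolding phi_star_A[OF AB BA] by (cases "f u") auto
  have "{u. f u \<noteq> \<infinity>} = (\<lambda>u. A *v u) -` {v. phi_star A lam f v \<noteq> \<infinity>}"
    by (auto simp: phi_star_A[OF AB BA])
  moreover have "inj (\<lambda>u. A *v u)"
    by (metis inv_vec1[OF BA] injI)
  ultimately have "finite {u. f u \<noteq> \<infinity>}"
    using assms(3) finite_vimageI unfolding is_tpoly_def by metis
  moreover have "f u \<noteq> -\<infinity>" for u
    using assms(3) unfolding is_tpoly_def e[of u] by (cases "phi_star A lam f (A *v u)") auto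
  ultimately show ?thesis unfolding is_tpoly_def by auto
qed

lemma tpoly_phi:
  fixes A B :: "int ^ 'n ^ 'n::finite"
  assumes AB: "A ** B = mat 1" and BA: "B ** A = mat 1"
    and "is_tpoly f"
  shows "is_tpoly (phi_star A lam f)"
proof -
  have "{v. phi_star A lam f v \<noteq> \<infinity>} = (\<lambda>v. B *v v) -` {u. f u \<noteq> \<infinity>}"
    unfolding phi_star_at[OF AB BA] by auto
  moreover have "inj (\<lambda>v. B *v v)"
    by (metis inv_vec1[OF AB] injI)
  ultimately have "finite {v. phi_star A lam f v \<noteq> \<infinity>}"
    using assms(3) finite_vimageI unfolding is_tpoly_def by metis
  moreover have "phi_star A lam f v \<noteq> -\<infinity>" for v
    using assms(3) unfolding is_tpoly_def phi_star_at[OF AB BA] by auto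
  ultimately show ?thesis unfolding is_tpoly_def by auto
qed


lemma ereal_add_sub_cancel[simp]: "x + ereal c + ereal (- c) = x"
  by (cases x) auto

lemma Inf_add_const:
  fixes S :: "ereal set"
  shows "Inf ((\<lambda>x. x + ereal c) ` S) = Inf S + ereal c"
proof (rule antisym)
  have "Inf ((\<lambda>x. x + ereal c) ` S) + ereal (- c) \<le> x" if "x \<in> S" for x
  proof -
    have "Inf ((\<lambda>x. x + ereal c) ` S) \<le> x + ereal c"
      using that by (auto intro: Inf_lower)
    then have "Inf ((\<lambda>x. x + ereal c) ` S) + ereal (- c) \<le> x + ereal c + ereal (- c)"
      by (rule add_right_mono)
    then show ?thesis by simp
  qed
  then have "Inf ((\<lambda>x. x + ereal c) ` S) + ereal (- c) \<le> Inf S"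
    by (rule Inf_greatest)
  then have "Inf ((\<lambda>x. x + ereal c) ` S) + ereal (- c) + ereal c \<le> Inf S + ereal c"
    by (rule add_right_mono)
  then show "Inf ((\<lambda>x. x + ereal c) ` S) \<le> Inf S + ereal c"
    using ereal_add_sub_cancel[of _ "- c"] by simp
next
  show "Inf S + ereal c \<le> Inf ((\<lambda>x. x + ereal c) ` S)"
    by (rule Inf_greatest) (auto intro: add_right_mono Inf_lower)
qed

lemma ereal_add_le_cancel[simp]: "(x + ereal c \<le> y + ereal c) \<longleftrightarrow> x \<le> y"
  by (cases x; cases y) auto

lemma ereal_add_eq_cancel[simp]: "(x + ereal c = y + ereal c) \<longleftrightarrow> x = y"
  by (cases x; cases y) auto

lemma phi_tmul:
  fixes A B :: "int ^ 'n ^ 'n::finite"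
  assumes AB: "A ** B = mat 1" and BA: "B ** A = mat 1"
  shows "phi_star A lam (tmul g f) = tmul (phi_star A lam g) (phi_star A lam f)"
proof
  fix v
  obtain u where v: "v = A *v u" using inv_vec1[OF AB] by metis
  have injA: "A *v x = A *v y \<longleftrightarrow> x = y" for x y
    using inv_vec1[OF BA] by metis
  have "{phi_star A lam g a' + phi_star A lam f b' | a' b'. a' + b' = A *v u}
      = (\<lambda>x. x + ereal (wdot lam u)) ` {g a + f b | a b. a + b = u}" (is "?L = ?R")
  proof
    show "?L \<subseteq> ?R"
    proof
      fix z assume "z \<in> ?L"
      then obtain a' b' where z: "z = phi_star A lam g a' + phi_star A lam f b'"
        and s: "a' + b' = A *v u" by blast
      define a where "a = B *v a'"
      define b where "b = B *v b'"
      have a': "a' = A *v a" and b': "b' = A *v b"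
        unfolding a_def b_def inv_vec1[OF AB] by simp_all
      have "A *v (a + b) = A *v u" using s a' b' by (simp add: matrix_vector_right_distrib)
      then have ab: "a + b = u" using injA by blast
      have "z = (g a + f b) + ereal (wdot lam u)"
        unfolding z a' b' phi_star_A[OF AB BA] ab[symmetric] wdot_add
        by (simp add: ac_simps)
      then show "z \<in> ?R" using ab by blast
    qed
  next
    show "?R \<subseteq> ?L"
    proof
      fix z assume "z \<in> ?R"
      then obtain a b where z: "z = (g a + f b) + ereal (wdot lam u)" and ab: "a + b = u" by blast
      have "z = phi_star A lam g (A *v a) + phi_star A lam f (A *v b)"
        unfolding z phi_star_A[OF AB BA] ab[symmetric] wdot_add by (simp add: ac_simps)
      moreover have "A *v a + A *v b = A *v u"
        by (simp add: ab[symmetric] matrix_vector_right_distrib)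
      ultimately show "z \<in> ?L" by blast
    qed
  qed
  then show "phi_star A lam (tmul g f) v = tmul (phi_star A lam g) (phi_star A lam f) v"
    unfolding v phi_star_A[OF AB BA] tmul_def \<open>?L = ?R\<close> Inf_add_const by simp
qed

lemma phi_pt:
  fixes A B :: "int ^ 'n ^ 'n::finite"
  assumes AB: "A ** B = mat 1" and BA: "B ** A = mat 1"
  shows "phi_star A lam f (A *v u) + ereal (wdot w (A *v u)) = f u + ereal (wdot (trop_phi A lam w) u)"
  unfolding phi_star_A[OF AB BA] wdot_trop[symmetric, where w=w and A=A and u=u and lam=lam]
  by (cases "f u") auto

lemma teval_phi:
  fixes A B :: "int ^ 'n ^ 'n::finite"
  assumes AB: "A ** B = mat 1" and BA: "B ** A = mat 1"
  shows "teval (phi_star A lam f) w = teval f (trop_phi A lam w)"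
proof -
  have "{phi_star A lam f v + ereal (wdot w v) | v. True}
      = {f u + ereal (wdot (trop_phi A lam w) u) | u. True}"
  proof (intro equalityI subsetI)
    fix z assume "z \<in> {phi_star A lam f v + ereal (wdot w v) | v. True}"
    then obtain v where z: "z = phi_star A lam f v + ereal (wdot w v)" by blast
    have "v = A *v (B *v v)" using inv_vec1[OF AB] by simp
    then have "z = f (B *v v) + ereal (wdot (trop_phi A lam w) (B *v v))"
      using z phi_pt[OF AB BA, of lam f "B *v v" w] by metis
    then show "z \<in> {f u + ereal (wdot (trop_phi A lam w) u) | u. True}" by blast
  next
    fix z assume "z \<in> {f u + ereal (wdot (trop_phi A lam w) u) | u. True}"
    then obtain u where z: "z = f u + ereal (wdot (trop_phi A lam w) u)" by blast
    then have "z = phi_star A lam f (A *v u) + ereal (wdot w (A *v u))"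
      using phi_pt[OF AB BA] by metis
    then show "z \<in> {phi_star A lam f v + ereal (wdot w v) | v. True}" by blast
  qed
  then show ?thesis unfolding teval_def by simp
qed

lemma initial_phi:
  fixes A B :: "int ^ 'n ^ 'n::finite"
  assumes AB: "A ** B = mat 1" and BA: "B ** A = mat 1"
  shows "phi_star A 0 (initial (trop_phi A lam w) f) = initial w (phi_star A lam f)"
proof
  fix v
  obtain u where v: "v = A *v u" using inv_vec1[OF AB] by metis
  show "phi_star A 0 (initial (trop_phi A lam w) f) v = initial w (phi_star A lam f) v"
    unfolding v phi_star_A[OF AB BA, of 0] initial_def phi_pt[OF AB BA] teval_phi[OF AB BA]
    by (simp add: phi_star_A[OF AB BA] zero_ereal_def[symmetric])
qed

definition tinv :: "int ^ 'n ^ 'n \<Rightarrow> real ^ 'n \<Rightarrow> real ^ 'n \<Rightarrow> real ^ 'n::finite" where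
  "tinv B lam w = (\<chi> i. \<Sum>j\<in>UNIV. real_of_int (B $ j $ i) * (w $ j - lam $ j))"

lemma trop_tinv:
  fixes A B :: "int ^ 'n ^ 'n::finite"
  assumes BA: "B ** A = mat 1"
  shows "trop_phi A lam (tinv B lam w) = w"
proof -
  have "(\<Sum>j\<in>UNIV. real_of_int (A $ j $ i) * (\<Sum>k\<in>UNIV. real_of_int (B $ k $ j) * (w $ k - lam $ k)))
        = w $ i - lam $ i" for i
  proof -
    have "(\<Sum>j\<in>UNIV. real_of_int (A $ j $ i) * (\<Sum>k\<in>UNIV. real_of_int (B $ k $ j) * (w $ k - lam $ k)))
        = (\<Sum>j\<in>UNIV. \<Sum>k\<in>UNIV. real_of_int (B $ k $ j * A $ j $ i) * (w $ k - lam $ k))"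
      by (simp add: sum_distrib_left mult_ac)
    also have "\<dots> = (\<Sum>k\<in>UNIV. \<Sum>j\<in>UNIV. real_of_int (B $ k $ j * A $ j $ i) * (w $ k - lam $ k))"
      by (rule sum.swap)
    also have "\<dots> = (\<Sum>k\<in>UNIV. real_of_int ((B ** A) $ k $ i) * (w $ k - lam $ k))"
      by (simp add: matrix_matrix_mult_def sum_distrib_right)
    also have "\<dots> = w $ i - lam $ i"
      unfolding BA by (simp add: mat_def if_distrib if_distribR cong: if_cong)
    finally show ?thesis .
  qed
  then show ?thesis unfolding trop_phi_def tinv_def by (simp add: vec_eq_iff)
qed


lemma phi_tzero: "phi_star A lam tzero = tzero"
  unfolding phi_star_def tzero_def
proof (rule ext)
  fix v
  show "Inf {(\<lambda>u. \<infinity>) u + ereal (wdot lam u) |u. A *v u = v} = (\<infinity>::ereal)"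
  proof -
    have "\<forall>x\<in>{(\<lambda>u. \<infinity>) u + ereal (wdot lam u) |u. A *v u = v}. x = \<infinity>"
      by auto
    then show ?thesis using Inf_top_conv(1)[where A="{(\<lambda>u. \<infinity>) u + ereal (wdot lam u) |u. A *v u = v}"]
      unfolding top_ereal_def by blast
  qed
qed

lemma phi_tadd:
  fixes A B :: "int ^ 'n ^ 'n::finite"
  assumes AB: "A ** B = mat 1" and BA: "B ** A = mat 1"
  shows "phi_star A lam (tadd f g) = tadd (phi_star A lam f) (phi_star A lam g)"
proof
  fix v
  show "phi_star A lam (tadd f g) v = tadd (phi_star A lam f) (phi_star A lam g) v"
    unfolding phi_star_at[OF AB BA] tadd_def
    by (simp add: min_def)
qed

lemma phi_nonzero:
  fixes A B :: "int ^ 'n ^ 'n::finite"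
  assumes AB: "A ** B = mat 1" and BA: "B ** A = mat 1"
  shows "phi_star A lam f = tzero \<longleftrightarrow> f = tzero"
proof
  assume "phi_star A lam f = tzero"
  then have "f u = \<infinity>" for u
    using phi_star_A[OF AB BA, of lam f u] by (simp add: tzero_def fun_eq_iff)
  then show "f = tzero" by (simp add: tzero_def fun_eq_iff)
qed (simp add: phi_tzero)

lemma var_iff:
  fixes A B :: "int ^ 'n ^ 'n::finite"
  assumes AB: "A ** B = mat 1" and BA: "B ** A = mat 1"
    and I': "I' = {f. is_tpoly f \<and> phi_star A lam f \<in> I}"
    and tI: "\<forall>f\<in>I. is_tpoly f"
  shows "trop_phi A lam w \<in> tvariety I' \<longleftrightarrow> w \<in> tvariety I"
proof
  have injA: "A *v x = A *v y \<longleftrightarrow> x = y" for x y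
    using inv_vec1[OF BA] by metis
  assume H: "trop_phi A lam w \<in> tvariety I'"
  show "w \<in> tvariety I"
    unfolding tvariety_def
  proof (intro CollectI ballI impI)
    fix F assume F: "F \<in> I" "F \<noteq> tzero"
    define f where "f = psi A lam F"
    have pf: "phi_star A lam f = F" unfolding f_def by (rule phi_psi[OF AB BA])
    have "f \<in> I'" using tpoly_pre[OF AB BA] pf F tI I' by auto
    moreover have "f \<noteq> tzero" using pf F phi_nonzero[OF AB BA] by auto
    ultimately obtain u v where uv: "u \<noteq> v"
      "f u + ereal (wdot (trop_phi A lam w) u) = teval f (trop_phi A lam w)"
      "f v + ereal (wdot (trop_phi A lam w) v) = teval f (trop_phi A lam w)"
      using H unfolding tvariety_def by blast
    show "\<exists>u v. u \<noteq> v \<and> F u + ereal (wdot w u) = teval F w \<and> F v + ereal (wdot w v) = teval F w"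
      apply (rule exI[of _ "A *v u"], rule exI[of _ "A *v v"])
      using uv injA phi_pt[OF AB BA, of lam f _ w] teval_phi[OF AB BA, of lam f w] pf
      by metis
  qed
next
  have injA: "A *v x = A *v y \<longleftrightarrow> x = y" for x y
    using inv_vec1[OF BA] by metis
  assume H: "w \<in> tvariety I"
  show "trop_phi A lam w \<in> tvariety I'"
    unfolding tvariety_def
  proof (intro CollectI ballI impI)
    fix f assume f: "f \<in> I'" "f \<noteq> tzero"
    define F where "F = phi_star A lam f"
    have "F \<in> I" using f I' F_def by auto
    moreover have "F \<noteq> tzero" using f phi_nonzero[OF AB BA] F_def by auto
    ultimately obtain u' v' where uv: "u' \<noteq> v'"
      "F u' + ereal (wdot w u') = teval F w"
      "F v' + ereal (wdot w v') = teval F w"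
      using H unfolding tvariety_def by blast
    have u': "u' = A *v (B *v u')" and v': "v' = A *v (B *v v')" using inv_vec1[OF AB] by auto
    show "\<exists>u v. u \<noteq> v \<and> f u + ereal (wdot (trop_phi A lam w) u) = teval f (trop_phi A lam w) \<and>
        f v + ereal (wdot (trop_phi A lam w) v) = teval f (trop_phi A lam w)"
      apply (rule exI[of _ "B *v u'"], rule exI[of _ "B *v v'"])
      using uv u' v' phi_pt[OF AB BA, of lam f _ w] teval_phi[OF AB BA, of lam f w] F_def
      by metis
  qed
qed

theorem lemma4p5:
  fixes A :: "int ^ 'n ^ 'n::finite" and lam :: "real ^ 'n" and I :: "'n tpoly set"
  assumes "invertible A"
    and "tropical_ideal I"
  defines "I' \<equiv> {f. is_tpoly f \<and> phi_star A lam f \<in> I}"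
  shows "tropical_ideal I' \<and>
         (\<forall>w. phi_star A 0 ` initial_ideal (trop_phi A lam w) I' = initial_ideal w I) \<and>
         tvariety I' = trop_phi A lam ` tvariety I"
proof -
  obtain B where AB: "A ** B = mat 1" and BA: "B ** A = mat 1"
    using assms(1) unfolding invertible_def by blast
  have tI: "\<forall>f\<in>I. is_tpoly f" and z: "tzero \<in> I" and ad: "\<forall>f\<in>I. \<forall>g\<in>I. tadd f g \<in> I"
    and mu: "\<forall>f\<in>I. \<forall>g. is_tpoly g \<longrightarrow> tmul g f \<in> I"
    using assms(2) unfolding tropical_ideal_def is_tideal_set_def by auto
  have el: "\<forall>f\<in>I. \<forall>g\<in>I. \<forall>u. f u = g u \<and> f u \<noteq> \<infinity> \<longrightarrow>
        (\<exists>h\<in>I. h u = \<infinity> \<and>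
           (\<forall>v. h v \<ge> min (f v) (g v) \<and> (f v \<noteq> g v \<longrightarrow> h v = min (f v) (g v))))"
    using assms(2) unfolding tropical_ideal_def by blast
  have P1: "tropical_ideal I'"
    unfolding tropical_ideal_def is_tideal_set_def
  proof (intro conjI ballI allI impI)
    show "is_tpoly f" if "f \<in> I'" for f using that I'_def by auto
    show "tzero \<in> I'" using z I'_def tpoly_pre[OF AB BA, of lam tzero] tI
      by (simp add: phi_tzero)
    show "tadd f g \<in> I'" if "f \<in> I'" "g \<in> I'" for f g
    proof -
      have "phi_star A lam (tadd f g) \<in> I" using that ad I'_def phi_tadd[OF AB BA] by auto
      then show ?thesis using tpoly_pre[OF AB BA] tI I'_def by blast
    qed
    show "tmul g f \<in> I'" if "f \<in> I'" "is_tpoly g" for f g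
    proof -
      have "phi_star A lam (tmul g f) \<in> I"
        using that mu I'_def phi_tmul[OF AB BA] tpoly_phi[OF AB BA] by auto
      then show ?thesis using tpoly_pre[OF AB BA] tI I'_def by blast
    qed
    fix f g u
    assume f: "f \<in> I'" and g: "g \<in> I'" and fu: "f u = g u \<and> f u \<noteq> \<infinity>"
    define F where "F = phi_star A lam f"
    define G where "G = phi_star A lam g"
    have FI: "F \<in> I" and GI: "G \<in> I" using f g I'_def F_def G_def by auto
    have FA: "F (A *v v) = f v + ereal (wdot lam v)" for v
      unfolding F_def by (rule phi_star_A[OF AB BA])
    have GA: "G (A *v v) = g v + ereal (wdot lam v)" for v
      unfolding G_def by (rule phi_star_A[OF AB BA])
    have "F (A *v u) = G (A *v u) \<and> F (A *v u) \<noteq> \<infinity>" using fu FA[of u] GA[of u] by auto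
    then obtain H where H: "H \<in> I" "H (A *v u) = \<infinity>"
      "\<And>v. H v \<ge> min (F v) (G v) \<and> (F v \<noteq> G v \<longrightarrow> H v = min (F v) (G v))"
      using el FI GI by blast
    define h where "h = psi A lam H"
    have ph: "phi_star A lam h = H" unfolding h_def by (rule phi_psi[OF AB BA])
    have HA: "H (A *v v) = h v + ereal (wdot lam v)" for v
      using phi_star_A[OF AB BA, of lam h v] ph by simp
    have mn: "min (F (A *v v)) (G (A *v v)) = min (f v) (g v) + ereal (wdot lam v)" for v
      unfolding FA GA by (simp add: min_def)
    show "\<exists>h\<in>I'. h u = \<infinity> \<and>
           (\<forall>v. h v \<ge> min (f v) (g v) \<and> (f v \<noteq> g v \<longrightarrow> h v = min (f v) (g v)))"
    proof (intro bexI conjI allI impI)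
      show "h \<in> I'" using tpoly_pre[OF AB BA] ph H(1) tI I'_def by auto
      show "h u = \<infinity>" using H(2) HA[of u] by simp
      fix v
      show "min (f v) (g v) \<le> h v"
        using H(3)[of "A *v v"] HA[of v] mn[of v] by simp
      assume "f v \<noteq> g v"
      then have "F (A *v v) \<noteq> G (A *v v)" using FA GA by simp
      then show "h v = min (f v) (g v)"
        using H(3)[of "A *v v"] HA[of v] mn[of v] by simp
    qed
  qed
  have P2: "phi_star A 0 ` initial_ideal (trop_phi A lam w) I' = initial_ideal w I" for w
  proof
    show "phi_star A 0 ` initial_ideal (trop_phi A lam w) I' \<subseteq> initial_ideal w I"
      unfolding initial_ideal_def using initial_phi[OF AB BA] I'_def by auto
    show "initial_ideal w I \<subseteq> phi_star A 0 ` initial_ideal (trop_phi A lam w) I'"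
    proof
      fix x assume "x \<in> initial_ideal w I"
      then obtain F where F: "F \<in> I" "x = initial w F" unfolding initial_ideal_def by auto
      define f where "f = psi A lam F"
      have pf: "phi_star A lam f = F" unfolding f_def by (rule phi_psi[OF AB BA])
      have "f \<in> I'" using tpoly_pre[OF AB BA] pf F tI I'_def by auto
      moreover have "x = phi_star A 0 (initial (trop_phi A lam w) f)"
        using F(2) pf initial_phi[OF AB BA] by simp
      ultimately show "x \<in> phi_star A 0 ` initial_ideal (trop_phi A lam w) I'"
        unfolding initial_ideal_def by blast
    qed
  qed
  have P3: "tvariety I' = trop_phi A lam ` tvariety I"
  proof
    show "trop_phi A lam ` tvariety I \<subseteq> tvariety I'"
      using var_iff[OF AB BA I'_def[THEN meta_eq_to_obj_eq] tI] by auto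
    show "tvariety I' \<subseteq> trop_phi A lam ` tvariety I"
    proof
      fix w' assume w': "w' \<in> tvariety I'"
      have e: "w' = trop_phi A lam (tinv B lam w')" by (simp add: trop_tinv[OF BA])
      then have "tinv B lam w' \<in> tvariety I" using w' var_iff[OF AB BA I'_def[THEN meta_eq_to_obj_eq] tI] by metis
      then show "w' \<in> trop_phi A lam ` tvariety I" using e by blast
    qed
  qed
  show ?thesis using P1 P2 P3 by blast
qed

end
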